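(* Assume (A1)–(A3). If $m_2<0$, then for every $k\ge0$ there exist $C>0$, $\theta>0$ and $\tilde\theta>0$ such that for all $i\ge k_0$ and $j,\ell\in\mathbb Z$, \[\mathbb P_{(i,j)}\bigl(Y_1(T_1^k)=\ell\bigr)\le C\exp(-\theta(\ell-j)-\tilde\theta i),\] where $T_1^k=\inf\{n>0: X_1(n)\le\max(k_0-1,k)\}$.
   Context: Let $\mathbb N=\{0,1,2,\dots\}$ and fix an integer $k_0\ge1$. Let $\mu$, $\mu'_j$ ($0\le j<k_0$), $\mu''_i$ ($0\le i<k_0$), $\mu_{ij}$ ($0\le i,j<k_0$) be probability measures on $\mathbb Z^2$. The random walk $Z=(X(n),Y(n))$ on $\mathbb N^2$ has transition probabilities $p((i,j)\to(i',j'))$ equal to $\mu(i'-i,j'-j)$ if $i,j\ge k_0$; $\mu'_j(i'-i,j'-j)$ if $i\ge k_0$, $0\le j<k_0$; $\mu''_i(i'-i,j'-j)$ if $0\le i<k_0$, $j\ge k_0$; $\mu_{ij}(i'-i,j'-j)$ if $0\le i,j<k_0$. Assumptions: (A1) $\mu(a,b)=0$ if $a<-k_0$ or $b<-k_0$; $\mu'_j(a,b)=0$ if $a<-k_0$ or $b<-j$; $\mu''_i(a,b)=0$ if $b<-k_0$ or $a<-i$; $\mu_{ij}(a,b)=0$ if $a<-i$ or $b<-j$. (A2) There are $\delta,\gamma,C>0$ with $\sup_{(i,j)\in\mathbb N^2}\mathbb E_{(i,j)}[\exp(\delta(X(1)-i)+\gamma(Y(1)-j))]\le C$. (A3) $Z_0,Z_1,Z_2,Z$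 are irreducible on their state spaces. $Z_0$: random walk on $\mathbb Z^2$ with increment law $\mu$; $m_2=\sum b\mu(a,b)$. $Z_1=(X_1,Y_1)$: Markov chain on $\mathbb N\times\mathbb Z$ with transitions $\mu(i'-i,j'-j)$ from $(i,j)$ if $i\ge k_0$ and $\mu''_i(i'-i,j'-j)$ if $0\le i<k_0$; $\mathbb P_{(i,j)}$ is its law from $(i,j)$. $Z_2$: Markov chain on $\mathbb Z\times\mathbb N$ with transitions $\mu$ if $j\ge k_0$ and $\mu'_j$ if $0\le j<k_0$. *)

theory Defs
  imports "HOL-Probability.Probability"
begin

type_synonym state = "int \<times> int"

definition shift :: "state \<Rightarrow> state pmf \<Rightarrow> state pmf" where
  "shift z m = map_pmf (\<lambda>d. (fst z + fst d, snd z + snd d)) m"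

definition K0 :: "state pmf \<Rightarrow> state \<Rightarrow> state pmf" where
  "K0 \<mu> z = shift z \<mu>"

definition K1 :: "nat \<Rightarrow> state pmf \<Rightarrow> (nat \<Rightarrow> state pmf) \<Rightarrow> state \<Rightarrow> state pmf" where
  "K1 k0 \<mu> \<mu>2 z = shift z (if fst z \<ge> int k0 then \<mu> else \<mu>2 (nat (fst z)))"

definition K2 :: "nat \<Rightarrow> state pmf \<Rightarrow> (nat \<Rightarrow> state pmf) \<Rightarrow> state \<Rightarrow> state pmf" where
  "K2 k0 \<mu> \<mu>1 z = shift z (if snd z \<ge> int k0 then \<mu> else \<mu>1 (nat (snd z)))"

text \<open>Kernel of Z on N^2. Arguments: \<mu>, \<mu>'_j, \<mu>''_i, \<mu>_{ij}.\<close>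
definition KZ :: "nat \<Rightarrow> state pmf \<Rightarrow> (nat \<Rightarrow> state pmf) \<Rightarrow> (nat \<Rightarrow> state pmf)
                  \<Rightarrow> (nat \<Rightarrow> nat \<Rightarrow> state pmf) \<Rightarrow> state \<Rightarrow> state pmf" where
  "KZ k0 \<mu> \<mu>1 \<mu>2 \<mu>12 z = shift z
     (if fst z \<ge> int k0 \<and> snd z \<ge> int k0 then \<mu>
      else if fst z \<ge> int k0 then \<mu>1 (nat (snd z))
      else if snd z \<ge> int k0 then \<mu>2 (nat (fst z))
      else \<mu>12 (nat (fst z)) (nat (snd z)))"

definition irreducible_on :: "state set \<Rightarrow> (state \<Rightarrow> state pmf) \<Rightarrow> bool" where
  "irreducible_on S K \<longleftrightarrow>
     (\<forall>x\<in>S. \<forall>y\<in>S. (\<lambda>u v. pmf (K u) v > 0)\<^sup>*\<^sup>* x y)"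

text \<open>hit K L n z w = P_z(T = n+1 and Z(T) = w), where T = inf{n>0 : first coordinate \<le> L}.\<close>
fun hit :: "(state \<Rightarrow> state pmf) \<Rightarrow> int \<Rightarrow> nat \<Rightarrow> state \<Rightarrow> state \<Rightarrow> real" where
  "hit K L 0 z w = (if fst w \<le> L then pmf (K z) w else 0)"
| "hit K L (Suc n) z w =
     infsum (\<lambda>v. pmf (K z) v * hit K L n v w) {v. fst v > L}"

text \<open>P_z(Y(T) = l) with T as above (the event implies T < \<infinity>).\<close>
definition hitY :: "(state \<Rightarrow> state pmf) \<Rightarrow> int \<Rightarrow> state \<Rightarrow> int \<Rightarrow> real" where
  "hitY K L z l = infsum (\<lambda>n. infsum (\<lambda>i'. hit K L n z (i', l)) UNIV) UNIV"

end

theory Submission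
  imports Defs
begin

lemma pmf_abs_summ:
  fixes p :: "'a pmf" and f :: "'a \<Rightarrow> real"
  assumes "integrable (measure_pmf p) f"
  shows "Infinite_Set_Sum.abs_summable_on (\<lambda>x. pmf p x * f x) UNIV"
proof -
  have "integrable (density (count_space UNIV) (pmf p)) f"
    using assms by (simp add: measure_pmf_eq_density)
  then have "integrable (count_space UNIV) (\<lambda>x. pmf p x *\<^sub>R f x)"
    by (subst (asm) integrable_density) auto
  then show ?thesis by (simp add: abs_summable_on_def)
qed

lemma pmf_summable:
  fixes p :: "'a pmf" and f :: "'a \<Rightarrow> real"
  assumes "integrable (measure_pmf p) f"
  shows "(\<lambda>x. pmf p x * f x) summable_on A"
proof -
  have "(\<lambda>x. norm (pmf p x * f x)) summable_on UNIV"
    by (rule abs_summable_equivalent[THEN iffD2, OF pmf_abs_summ[OF assms]])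
  then have "(\<lambda>x. pmf p x * f x) summable_on UNIV" by (rule abs_summable_summable)
  then show ?thesis using summable_on_subset_banach by blast
qed

lemma pmf_infsum_expectation:
  fixes p :: "'a pmf" and f :: "'a \<Rightarrow> real"
  assumes "integrable (measure_pmf p) f"
  shows "infsum (\<lambda>x. pmf p x * f x) UNIV = measure_pmf.expectation p f"
  using pmf_abs_summ[OF assms] by (simp add: pmf_expectation_eq_infsetsum infsetsum_infsum)

lemma infsum_le_bound:
  fixes g :: "'a \<Rightarrow> real"
  assumes nn: "\<And>x. x \<in> A \<Longrightarrow> g x \<ge> 0"
    and fin: "\<And>F. finite F \<Longrightarrow> F \<subseteq> A \<Longrightarrow> sum g F \<le> B"
  shows "g summable_on A" "infsum g A \<le> B"
proof -
  have bdd: "bdd_above (sum g ` {F. F \<subseteq> A \<and> finite F})"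
    using fin by (auto simp: bdd_above_def)
  show sm: "g summable_on A" by (rule nonneg_bdd_above_summable_on[OF nn bdd]) auto
  show "infsum g A \<le> B" by (rule infsum_le_finite_sums[OF sm fin])
qed

lemma exp_taylor2: "exp (x::real) \<le> 1 + x + x^2 * exp \<bar>x\<bar>"
proof -
  obtain t where t: "\<bar>t\<bar> \<le> \<bar>x\<bar>" "exp x = (\<Sum>m<2. (x ^ m) / fact m) + (exp t / fact 2) * x ^ 2"
    using Maclaurin_exp_le[of x 2] by blast
  have "exp t \<le> exp \<bar>x\<bar>" using t(1) by simp
  then have "exp t * x ^ 2 \<le> exp \<bar>x\<bar> * x^2"
    by (rule mult_right_mono) simp
  moreover have "exp \<bar>x\<bar> * x^2 \<ge> 0" by simp
  moreover have "(exp t / fact 2) * x ^ 2 = (exp t * x^2) / 2" by (simp add: numeral_2_eq_2)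
  ultimately have "(exp t / fact 2) * x ^ 2 \<le> x^2 * exp \<bar>x\<bar>"
    by (simp only: mult.commute[of "x^2"])
  then show ?thesis using t(2) by (simp add: numeral_2_eq_2)
qed

lemma exp_ge_sq: assumes "(y::real) \<ge> 0" shows "y^2 \<le> 4 * exp y"
proof -
  have "1 + y/2 \<le> exp (y/2)" by (rule exp_ge_add_one_self)
  then have "y/2 \<le> exp (y/2)" by linarith
  then have "(y/2)^2 \<le> (exp (y/2))^2" using assms by (intro power_mono) auto
  also have "(exp (y/2))^2 = exp y" by (simp add: power2_eq_square flip: exp_add)
  finally show ?thesis by (simp add: power2_eq_square)
qed

lemma mgf_le_one:
  fixes p :: "'a pmf" and Z :: "'a \<Rightarrow> real"
  assumes t0: "t0 > 0" and intW: "integrable (measure_pmf p) (\<lambda>x. exp (t0 * \<bar>Z x\<bar>))"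
    and neg: "measure_pmf.expectation p Z < 0"
  shows "\<exists>s>0. integrable (measure_pmf p) (\<lambda>x. exp (s * Z x)) \<and>
           measure_pmf.expectation p (\<lambda>x. exp (s * Z x)) \<le> 1"
proof -
  define W where "W x = exp (t0 * \<bar>Z x\<bar>)" for x
  define EZ where "EZ = measure_pmf.expectation p Z"
  define EW where "EW = measure_pmf.expectation p W"
  define K where "K = 16 / t0^2"
  have Kpos: "K > 0" using t0 by (simp add: K_def)
  have EW0: "EW \<ge> 0" unfolding EW_def W_def by (rule integral_nonneg_AE) auto
  have intW': "integrable (measure_pmf p) W" using intW by (simp add: W_def[abs_def])
  have intZ: "integrable (measure_pmf p) Z"
  proof (rule Bochner_Integration.integrable_bound)
    show "integrable (measure_pmf p) (\<lambda>x. W x / t0)" using intW' by simp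
    show "AE x in measure_pmf p. norm (Z x) \<le> norm (W x / t0)"
    proof (rule AE_I2)
      fix x
      have "t0 * \<bar>Z x\<bar> \<le> W x" unfolding W_def
        using exp_ge_add_one_self[of "t0 * \<bar>Z x\<bar>"] by linarith
      then show "norm (Z x) \<le> norm (W x / t0)" using t0
        by (simp add: field_simps W_def)
    qed
  qed simp
  define s where "s = min (t0/2) (- EZ / (2 * K * EW + 1))"
  have "0 \<le> K * EW" using Kpos EW0 by simp
  then have den: "2 * K * EW + 1 > 0" by linarith
  have EZneg: "EZ < 0" using neg by (simp add: EZ_def)
  have spos: "s > 0" using t0 den EZneg by (simp add: s_def divide_neg_pos)
  have st0: "s \<le> t0/2" unfolding s_def by (rule min.cobounded1)
  have sK: "s * (K * EW) \<le> - EZ / 2"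
  proof -
    have "s \<le> - EZ / (2 * K * EW + 1)" unfolding s_def by (rule min.cobounded2)
    then have "s * (2 * K * EW + 1) \<le> - EZ" using den by (simp add: field_simps)
    then show ?thesis using spos by (simp add: algebra_simps)
  qed
  have pw: "exp (s * Z x) \<le> 1 + s * Z x + s^2 * K * W x" for x
  proof -
    have "exp (s * Z x) \<le> 1 + s * Z x + (s * Z x)^2 * exp \<bar>s * Z x\<bar>" by (rule exp_taylor2)
    moreover have "(Z x)^2 * exp \<bar>s * Z x\<bar> \<le> K * W x"
    proof -
      define y where "y = t0 * \<bar>Z x\<bar> / 2"
      have y0: "y \<ge> 0" using t0 by (simp add: y_def)
      have "(Z x)^2 = 4 * y^2 / t0^2" using t0 by (simp add: y_def power2_eq_square field_simps)
      also have "\<dots> \<le> 4 * (4 * exp y) / t0^2"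
        using exp_ge_sq[OF y0] t0 by (intro divide_right_mono) auto
      finally have a: "(Z x)^2 \<le> K * exp y" by (simp add: K_def)
      have "s * \<bar>Z x\<bar> \<le> (t0/2) * \<bar>Z x\<bar>" using st0 by (rule mult_right_mono) simp
      then have b: "exp \<bar>s * Z x\<bar> \<le> exp y" using spos
        by (simp add: y_def abs_mult)
      have "(Z x)^2 * exp \<bar>s * Z x\<bar> \<le> (K * exp y) * exp y"
        by (rule mult_mono[OF a b]) (use Kpos in simp_all)
      also have "\<dots> = K * W x" by (simp add: W_def y_def flip: exp_add mult.assoc)
      finally show ?thesis .
    qed
    then have "(s * Z x)^2 * exp \<bar>s * Z x\<bar> \<le> s^2 * K * W x"
      using mult_left_mono[of _ _ "s^2"] by (simp add: power_mult_distrib mult.assoc)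
    ultimately show ?thesis by linarith
  qed
  have intE: "integrable (measure_pmf p) (\<lambda>x. exp (s * Z x))"
  proof (rule Bochner_Integration.integrable_bound[OF intW'])
    show "AE x in measure_pmf p. norm (exp (s * Z x)) \<le> norm (W x)"
    proof (rule AE_I2)
      fix x
      have a1: "s * Z x \<le> s * \<bar>Z x\<bar>" using spos by (intro mult_left_mono) auto
      have a2: "s * \<bar>Z x\<bar> \<le> t0 * \<bar>Z x\<bar>" using st0 t0 by (intro mult_right_mono) auto
      have "s * Z x \<le> t0 * \<bar>Z x\<bar>" using a1 a2 by linarith
      then show "norm (exp (s * Z x)) \<le> norm (W x)" by (simp add: W_def)
    qed
  qed simp
  have intR: "integrable (measure_pmf p) (\<lambda>x. 1 + s * Z x + s^2 * K * W x)"
    using intZ intW' by simp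
  have "measure_pmf.expectation p (\<lambda>x. exp (s * Z x))
      \<le> measure_pmf.expectation p (\<lambda>x. 1 + s * Z x + s^2 * K * W x)"
    by (rule integral_mono[OF intE intR pw])
  also have "\<dots> = 1 + s * EZ + s^2 * K * EW"
    using intZ intW' by (simp add: EZ_def EW_def)
  also have "\<dots> \<le> 1"
  proof -
    have "s^2 * K * EW = s * (s * (K * EW))" by (simp add: power2_eq_square)
    also have "\<dots> \<le> s * (- EZ / 2)" using sK spos by (intro mult_left_mono) auto
    finally have "s^2 * K * EW \<le> s * (- EZ / 2)" .
    moreover have "s * EZ < 0" using spos EZneg by (rule mult_pos_neg)
    moreover have "s * (- EZ / 2) = - (s * EZ) / 2" by simp
    ultimately show ?thesis by linarith
  qed
  finally show ?thesis using spos intE by blast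
qed

lemma infsum_finsum:
  fixes g :: "'i \<Rightarrow> 'a \<Rightarrow> real"
  assumes "finite I" "\<And>i. i \<in> I \<Longrightarrow> g i summable_on A"
  shows "(\<lambda>x. \<Sum>i\<in>I. g i x) summable_on A \<and> infsum (\<lambda>x. \<Sum>i\<in>I. g i x) A = (\<Sum>i\<in>I. infsum (g i) A)"
  using assms
proof (induction I rule: finite_induct)
  case empty
  then show ?case by simp
next
  case (insert i I)
  then have a: "(\<lambda>x. \<Sum>i\<in>I. g i x) summable_on A" "infsum (\<lambda>x. \<Sum>i\<in>I. g i x) A = (\<Sum>i\<in>I. infsum (g i) A)"
    and b: "g i summable_on A" by auto
  show ?case using insert(1,2) a b
    by (simp add: summable_on_add infsum_add)
qed

lemma sum_pmf_le1: "finite F \<Longrightarrow> sum (pmf p) F \<le> 1"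
  using measure_measure_pmf_finite[of F p] measure_pmf.prob_le_1[of p F] by simp

lemma hit_bounds: "0 \<le> hit K L n z w \<and> hit K L n z w \<le> 1"
proof (induction n arbitrary: z)
  case 0
  show ?case by (simp add: pmf_le_1)
next
  case (Suc n)
  define g where "g v = pmf (K z) v * hit K L n v w" for v
  have nn: "\<And>v. 0 \<le> g v" using Suc.IH by (simp add: g_def)
  have fin: "sum g F \<le> 1" if "finite F" for F
  proof -
    have "sum g F \<le> sum (pmf (K z)) F"
      by (rule sum_mono) (use Suc.IH in \<open>auto simp: g_def intro: mult_left_le\<close>)
    also have "\<dots> \<le> 1" using that by (rule sum_pmf_le1)
    finally show ?thesis .
  qed
  have "infsum g {v. L < fst v} \<le> 1" by (rule infsum_le_bound(2)) (use nn fin in auto)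
  moreover have "0 \<le> infsum g {v. L < fst v}" by (rule infsum_nonneg) (use nn in auto)
  ultimately show ?case by (simp add: g_def[abs_def])
qed

lemma hit_summable: "(\<lambda>v. pmf (K z) v * hit K L n v w) summable_on A"
proof (rule infsum_le_bound(1))
  show "0 \<le> pmf (K z) v * hit K L n v w" for v using hit_bounds by simp
  show "(\<Sum>v\<in>F. pmf (K z) v * hit K L n v w) \<le> 1" if "finite F" for F
  proof -
    have "(\<Sum>v\<in>F. pmf (K z) v * hit K L n v w) \<le> sum (pmf (K z)) F"
      by (rule sum_mono, rule mult_left_le) (use hit_bounds in auto)
    also have "\<dots> \<le> 1" using that by (rule sum_pmf_le1)
    finally show ?thesis .
  qed
qed

lemma hit_zero: "L < fst w \<Longrightarrow> hit K L n z w = 0"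
  by (induction n arbitrary: z) (auto intro: infsum_0)

lemma final_part:
  fixes KK :: "state \<Rightarrow> state pmf" and f :: "state \<Rightarrow> real" and L :: int and k0 :: nat
    and s c :: real
  assumes spos: "s > 0" and cpos: "c > 0"
    and f_def: "\<And>v. f v = exp (s * real_of_int (snd v) - s * c * real_of_int (fst v))"
    and L: "L \<ge> int k0 - 1"
    and stepM: "\<And>z A. fst z \<ge> int k0 \<Longrightarrow> (\<lambda>v. pmf (KK z) v * f v) summable_on A \<and>
                    infsum (\<lambda>v. pmf (KK z) v * f v) UNIV \<le> f z"
    and i: "i \<ge> int k0"
  shows "hitY KK L (i, j) l \<le> exp (s * c * real_of_int L) *
           exp (- s * real_of_int (l - j) - s * c * real_of_int i)"
proof -
  define R where "R = {v::state. L < fst v}"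
  have fpos: "f v > 0" for v by (simp add: f_def)
  have claim: "(\<Sum>n<N. \<Sum>i'\<in>F. hit KK L n z (i', l) * f (i', l)) \<le> f z"
    if "fst z \<ge> int k0" "finite F" for N z F
    using that
  proof (induction N arbitrary: z)
    case 0
    then show ?case using fpos[of z] by simp
  next
    case (Suc N)
    note z = Suc.prems(1) and finF = Suc.prems(2)
    define P where "P = pmf (KK z)"
    define G where "G v = (\<Sum>n<N. \<Sum>i'\<in>F. hit KK L n v (i', l) * f (i', l))" for v
    define F0 where "F0 = (\<lambda>i'. (i', l)) ` {i'\<in>F. i' \<le> L}"
    have finF0: "finite F0" using finF by (simp add: F0_def)
    have X0: "(\<Sum>i'\<in>F. hit KK L 0 z (i', l) * f (i', l)) = (\<Sum>v\<in>F0. P v * f v)"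
    proof -
      have "(\<Sum>i'\<in>F. hit KK L 0 z (i', l) * f (i', l))
          = (\<Sum>i'\<in>F. if i' \<le> L then P (i', l) * f (i', l) else 0)"
        by (rule sum.cong) (auto simp: P_def)
      also have "\<dots> = (\<Sum>i'\<in>{i'\<in>F. i' \<le> L}. P (i', l) * f (i', l))"
        using finF by (simp add: sum.inter_filter)
      also have "\<dots> = (\<Sum>v\<in>F0. P v * f v)"
        unfolding F0_def by (subst sum.reindex) (auto simp: inj_on_def)
      finally show ?thesis .
    qed
    have Xs: "(\<Sum>i'\<in>F. hit KK L (Suc n) z (i', l) * f (i', l))
        = infsum (\<lambda>v. \<Sum>i'\<in>F. P v * hit KK L n v (i', l) * f (i', l)) R
          \<and> (\<lambda>v. \<Sum>i'\<in>F. P v * hit KK L n v (i', l) * f (i', l)) summable_on R" for n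
    proof -
      have sm: "(\<lambda>v. P v * hit KK L n v (i', l) * f (i', l)) summable_on R" for i'
        unfolding P_def by (rule summable_on_cmult_left) (rule hit_summable)
      have e: "hit KK L (Suc n) z (i', l) * f (i', l)
             = infsum (\<lambda>v. P v * hit KK L n v (i', l) * f (i', l)) R" for i'
      proof -
        have e1: "hit KK L (Suc n) z (i', l) = infsum (\<lambda>v. P v * hit KK L n v (i', l)) R"
          by (simp add: R_def P_def)
        have e2: "infsum (\<lambda>v. P v * hit KK L n v (i', l)) R * f (i', l)
            = infsum (\<lambda>v. P v * hit KK L n v (i', l) * f (i', l)) R"
          by (rule infsum_cmult_left[symmetric]) (simp add: P_def hit_summable)
        show ?thesis using e1 e2 by simp
      qed
      show ?thesis unfolding e
        using infsum_finsum[of F "\<lambda>i' v. P v * hit KK L n v (i', l) * f (i', l)" R] finF sm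
        by simp
    qed
    have Gsum: "(\<Sum>n<N. \<Sum>i'\<in>F. hit KK L (Suc n) z (i', l) * f (i', l))
        = infsum (\<lambda>v. P v * G v) R"
    proof -
      have "(\<Sum>n<N. \<Sum>i'\<in>F. hit KK L (Suc n) z (i', l) * f (i', l))
          = (\<Sum>n<N. infsum (\<lambda>v. \<Sum>i'\<in>F. P v * hit KK L n v (i', l) * f (i', l)) R)"
        using Xs by simp
      also have "\<dots> = infsum (\<lambda>v. \<Sum>n<N. \<Sum>i'\<in>F. P v * hit KK L n v (i', l) * f (i', l)) R"
        using infsum_finsum[of "{..<N}" "\<lambda>n v. \<Sum>i'\<in>F. P v * hit KK L n v (i', l) * f (i', l)" R] Xs
        by simp
      also have "\<dots> = infsum (\<lambda>v. P v * G v) R"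
        by (simp add: G_def sum_distrib_left mult.assoc)
      finally show ?thesis .
    qed
    have smG: "(\<lambda>v. P v * G v) summable_on R"
    proof -
      have "(\<lambda>v. \<Sum>n<N. \<Sum>i'\<in>F. P v * hit KK L n v (i', l) * f (i', l)) summable_on R"
        using infsum_finsum[of "{..<N}" "\<lambda>n v. \<Sum>i'\<in>F. P v * hit KK L n v (i', l) * f (i', l)" R] Xs
        by simp
      then show ?thesis by (simp add: G_def sum_distrib_left mult.assoc)
    qed
    have smPf: "(\<lambda>v. P v * f v) summable_on A" for A using stepM[OF z] by (simp add: P_def)
    have "infsum (\<lambda>v. P v * G v) R \<le> infsum (\<lambda>v. P v * f v) R"
    proof (rule infsum_mono[OF smG smPf])
      fix v assume "v \<in> R"
      then have "fst v \<ge> int k0" using L by (simp add: R_def)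
      then have "G v \<le> f v" unfolding G_def using Suc.IH finF by blast
      then show "P v * G v \<le> P v * f v" by (rule mult_left_mono) (simp add: P_def)
    qed
    moreover have "(\<Sum>v\<in>F0. P v * f v) + infsum (\<lambda>v. P v * f v) R \<le> f z"
    proof -
      have disj: "F0 \<inter> R = {}" by (auto simp: F0_def R_def)
      have "(\<Sum>v\<in>F0. P v * f v) + infsum (\<lambda>v. P v * f v) R = infsum (\<lambda>v. P v * f v) (F0 \<union> R)"
        using infsum_Un_disjoint[OF smPf smPf disj] finF0 by simp
      also have "\<dots> \<le> infsum (\<lambda>v. P v * f v) UNIV"
        by (rule infsum_mono2[OF smPf smPf]) (auto simp: P_def intro: mult_nonneg_nonneg less_imp_le[OF fpos])
      also have "\<dots> \<le> f z" using stepM[OF z] by (simp add: P_def)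
      finally show ?thesis .
    qed
    moreover have "(\<Sum>n<Suc N. \<Sum>i'\<in>F. hit KK L n z (i', l) * f (i', l))
        = (\<Sum>i'\<in>F. hit KK L 0 z (i', l) * f (i', l)) + (\<Sum>n<N. \<Sum>i'\<in>F. hit KK L (Suc n) z (i', l) * f (i', l))"
      by (rule sum.lessThan_Suc_shift)
    ultimately show ?case using X0 Gsum by linarith
  qed
  define z where "z = (i, j)"
  have z: "fst z \<ge> int k0" using i by (simp add: z_def)
  define c0 where "c0 = exp (s * real_of_int l - s * c * real_of_int L)"
  have c0pos: "c0 > 0" by (simp add: c0_def)
  have hnn: "0 \<le> hit KK L n z w" for n w using hit_bounds by blast
  have lowb: "hit KK L n z (i', l) * c0 \<le> hit KK L n z (i', l) * f (i', l)" for n i'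
  proof (cases "i' \<le> L")
    case True
    have "s * c * real_of_int i' \<le> s * c * real_of_int L"
      using True spos cpos by (intro mult_left_mono) auto
    then have "c0 \<le> f (i', l)" by (simp add: c0_def f_def)
    then show ?thesis using hnn by (intro mult_left_mono) auto
  next
    case False
    then show ?thesis by (simp add: hit_zero)
  qed
  define B where "B = f z / c0"
  have finb: "(\<Sum>n<N. \<Sum>i'\<in>F. hit KK L n z (i', l)) \<le> B" if "finite F" for N F
  proof -
    have "(\<Sum>n<N. \<Sum>i'\<in>F. hit KK L n z (i', l)) * c0 = (\<Sum>n<N. \<Sum>i'\<in>F. hit KK L n z (i', l) * c0)"
      by (simp add: sum_distrib_right)
    also have "\<dots> \<le> (\<Sum>n<N. \<Sum>i'\<in>F. hit KK L n z (i', l) * f (i', l))"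
      by (intro sum_mono lowb)
    also have "\<dots> \<le> f z" by (rule claim[OF z that])
    finally show ?thesis using c0pos by (simp add: B_def pos_le_divide_eq)
  qed
  have summ_n: "(\<lambda>i'. hit KK L n z (i', l)) summable_on UNIV" for n
  proof (rule infsum_le_bound(1))
    show "0 \<le> hit KK L n z (i', l)" for i' by (rule hnn)
    show "(\<Sum>i'\<in>F. hit KK L n z (i', l)) \<le> B" if "finite F" "F \<subseteq> UNIV" for F
    proof -
      have "(\<Sum>i'\<in>F. hit KK L n z (i', l)) \<le> (\<Sum>m<Suc n. \<Sum>i'\<in>F. hit KK L m z (i', l))"
        by (rule member_le_sum[where f = "\<lambda>m. \<Sum>i'\<in>F. hit KK L m z (i', l)"])
           (auto intro: sum_nonneg hnn)
      also have "\<dots> \<le> B" by (rule finb[OF that(1)])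
      finally show ?thesis .
    qed
  qed
  have gN: "(\<Sum>n<N. infsum (\<lambda>i'. hit KK L n z (i', l)) UNIV) \<le> B" for N
  proof -
    have "(\<Sum>n<N. infsum (\<lambda>i'. hit KK L n z (i', l)) UNIV)
        = infsum (\<lambda>i'. \<Sum>n<N. hit KK L n z (i', l)) UNIV"
      using infsum_finsum[of "{..<N}" "\<lambda>n i'. hit KK L n z (i', l)" UNIV] summ_n by simp
    also have "\<dots> \<le> B"
    proof (rule infsum_le_bound(2))
      show "0 \<le> (\<Sum>n<N. hit KK L n z (i', l))" for i' by (intro sum_nonneg hnn)
      show "(\<Sum>i'\<in>F. \<Sum>n<N. hit KK L n z (i', l)) \<le> B" if "finite F" "F \<subseteq> UNIV" for F
        using finb[OF that(1), of N] by (simp add: sum.swap[of _ F])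
    qed
    finally show ?thesis .
  qed
  have "hitY KK L z l \<le> B"
    unfolding hitY_def
  proof (rule infsum_le_bound(2))
    show "0 \<le> infsum (\<lambda>i'. hit KK L n z (i', l)) UNIV" for n by (rule infsum_nonneg) (rule hnn)
    show "(\<Sum>n\<in>S. infsum (\<lambda>i'. hit KK L n z (i', l)) UNIV) \<le> B" if finS: "finite S" "S \<subseteq> UNIV" for S
    proof -
      obtain N where N: "S \<subseteq> {..<N}" using finite_nat_bounded[OF finS(1)] by blast
      have "(\<Sum>n\<in>S. infsum (\<lambda>i'. hit KK L n z (i', l)) UNIV)
          \<le> (\<Sum>n<N. infsum (\<lambda>i'. hit KK L n z (i', l)) UNIV)"
        by (rule sum_mono2[OF _ N]) (auto intro: infsum_nonneg hnn)
      also have "\<dots> \<le> B" by (rule gN)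
      finally show ?thesis .
    qed
  qed
  moreover have "B = exp (s * c * real_of_int L) * exp (- s * real_of_int (l - j) - s * c * real_of_int i)"
  proof -
    have "B = exp ((s * real_of_int j - s * c * real_of_int i) - (s * real_of_int l - s * c * real_of_int L))"
      by (simp add: B_def f_def z_def c0_def exp_diff)
    also have "\<dots> = exp (s * c * real_of_int L + (- s * real_of_int (l - j) - s * c * real_of_int i))"
      by (simp add: algebra_simps)
    also have "\<dots> = exp (s * c * real_of_int L) * exp (- s * real_of_int (l - j) - s * c * real_of_int i)"
      by (rule exp_add)
    finally show ?thesis .
  qed
  ultimately show ?thesis by (simp add: z_def)
qed

theorem lemma5p6:
  fixes k0 :: nat
    and \<mu> :: "(int \<times> int) pmf"
    and \<mu>1 :: "nat \<Rightarrow> (int \<times> int) pmf"   \<comment> \<open>\<mu>'_j\<close>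
    and \<mu>2 :: "nat \<Rightarrow> (int \<times> int) pmf"   \<comment> \<open>\<mu>''_i\<close>
    and \<mu>12 :: "nat \<Rightarrow> nat \<Rightarrow> (int \<times> int) pmf" \<comment> \<open>\<mu>_{ij}\<close>
  assumes k0: "k0 \<ge> 1"
    and A1_mu: "\<And>a b. a < - int k0 \<or> b < - int k0 \<Longrightarrow> pmf \<mu> (a, b) = 0"
    and A1_mu1: "\<And>j a b. j < k0 \<Longrightarrow> a < - int k0 \<or> b < - int j \<Longrightarrow> pmf (\<mu>1 j) (a, b) = 0"
    and A1_mu2: "\<And>i a b. i < k0 \<Longrightarrow> b < - int k0 \<or> a < - int i \<Longrightarrow> pmf (\<mu>2 i) (a, b) = 0"
    and A1_mu12: "\<And>i j a b. i < k0 \<Longrightarrow> j < k0 \<Longrightarrow> a < - int i \<or> b < - int j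
                    \<Longrightarrow> pmf (\<mu>12 i j) (a, b) = 0"
    and A2: "\<exists>\<delta> \<gamma> C. \<delta> > 0 \<and> \<gamma> > 0 \<and> C > 0 \<and>
              (\<forall>i j::nat. (\<integral>\<^sup>+ z. ennreal (exp (\<delta> * real_of_int (fst z - int i)
                                            + \<gamma> * real_of_int (snd z - int j)))
                           \<partial>measure_pmf (KZ k0 \<mu> \<mu>1 \<mu>2 \<mu>12 (int i, int j))) \<le> ennreal C)"
    and A3_Z0: "irreducible_on UNIV (K0 \<mu>)"
    and A3_Z1: "irreducible_on {z. fst z \<ge> 0} (K1 k0 \<mu> \<mu>2)"
    and A3_Z2: "irreducible_on {z. snd z \<ge> 0} (K2 k0 \<mu> \<mu>1)"
    and A3_Z: "irreducible_on {z. fst z \<ge> 0 \<and> snd z \<ge> 0} (KZ k0 \<mu> \<mu>1 \<mu>2 \<mu>12)"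
    and m2_neg: "measure_pmf.expectation \<mu> (\<lambda>d. real_of_int (snd d)) < 0"
  shows "\<forall>k::nat. \<exists>C>0. \<exists>\<theta>>0. \<exists>\<theta>'>0. \<forall>i j l. i \<ge> int k0 \<longrightarrow>
           hitY (K1 k0 \<mu> \<mu>2) (max (int k0 - 1) (int k)) (i, j) l
             \<le> C * exp (- \<theta> * real_of_int (l - j) - \<theta>' * real_of_int i)"
proof -
  obtain \<delta> \<gamma> C0 where dg: "\<delta> > 0" "\<gamma> > 0" "C0 > 0" and
    bnd: "\<forall>i j::nat. (\<integral>\<^sup>+ z. ennreal (exp (\<delta> * real_of_int (fst z - int i)
                                            + \<gamma> * real_of_int (snd z - int j)))
                           \<partial>measure_pmf (KZ k0 \<mu> \<mu>1 \<mu>2 \<mu>12 (int i, int j))) \<le> ennreal C0"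
    using A2 by blast
  define kk where "kk = real k0"
  have kk0: "kk \<ge> 0" by (simp add: kk_def)
  have supp: "real_of_int (fst d) \<ge> - kk \<and> real_of_int (snd d) \<ge> - kk" if "d \<in> set_pmf \<mu>" for d
  proof -
    have "pmf \<mu> d \<noteq> 0" using that by (simp add: set_pmf_iff)
    then have "\<not> (fst d < - int k0 \<or> snd d < - int k0)" using A1_mu[of "fst d" "snd d"] by auto
    then show ?thesis by (simp add: kk_def)
  qed
  have KZ0: "KZ k0 \<mu> \<mu>1 \<mu>2 \<mu>12 (int k0, int k0) = map_pmf (\<lambda>d. (int k0 + fst d, int k0 + snd d)) \<mu>"
    by (simp add: KZ_def shift_def)
  define W0 where "W0 d = exp (\<delta> * real_of_int (fst d) + \<gamma> * real_of_int (snd d))" for d :: "int \<times> int"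
  have nnW: "(\<integral>\<^sup>+ d. ennreal (W0 d) \<partial>measure_pmf \<mu>) \<le> ennreal C0"
    using bnd[rule_format, of k0 k0] by (simp add: KZ0 W0_def)
  have intW0: "integrable (measure_pmf \<mu>) W0"
  proof (rule integrableI_bounded)
    have nW: "norm (W0 d) = W0 d" for d by (simp add: W0_def)
    have "(\<integral>\<^sup>+ d. ennreal (norm (W0 d)) \<partial>measure_pmf \<mu>) \<le> ennreal C0"
      using nnW by (simp only: nW)
    then show "(\<integral>\<^sup>+ d. ennreal (norm (W0 d)) \<partial>measure_pmf \<mu>) < \<infinity>"
      by (rule le_less_trans) simp
  qed simp
  define t where "t = min \<delta> \<gamma>"
  have t0: "t > 0" "t \<le> \<delta>" "t \<le> \<gamma>" using dg by (auto simp: t_def)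
  define S where "S d = \<bar>real_of_int (fst d)\<bar> + \<bar>real_of_int (snd d)\<bar>" for d :: "int \<times> int"
  define V where "V d = exp (t * S d)" for d
  define K1c where "K1c = (\<delta> + \<gamma>) * kk + 4 * t * kk"
  have Vb: "V d \<le> exp K1c * W0 d" if "d \<in> set_pmf \<mu>" for d
  proof -
    define A where "A = real_of_int (fst d)"
    define B where "B = real_of_int (snd d)"
    have AB: "A \<ge> - kk" "B \<ge> - kk" using supp[OF that] by (auto simp: A_def B_def)
    have "\<bar>A\<bar> \<le> A + 2 * kk" "\<bar>B\<bar> \<le> B + 2 * kk" using AB kk0 by auto
    then have 1: "t * \<bar>A\<bar> \<le> t * (A + 2 * kk)" "t * \<bar>B\<bar> \<le> t * (B + 2 * kk)"
      using t0 by (auto intro: mult_left_mono)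
    have 2: "0 \<le> (\<delta> - t) * (A + kk)" "0 \<le> (\<gamma> - t) * (B + kk)" "0 \<le> t * kk"
      using AB t0 kk0 by auto
    have "t * S d \<le> K1c + (\<delta> * A + \<gamma> * B)"
      using 1 2 unfolding S_def K1c_def A_def[symmetric] B_def[symmetric]
      by (simp add: algebra_simps)
    then have "exp (t * S d) \<le> exp (K1c + (\<delta> * A + \<gamma> * B))" by simp
    then show ?thesis by (simp add: V_def W0_def A_def B_def exp_add)
  qed
  have intV: "integrable (measure_pmf \<mu>) V"
  proof (rule Bochner_Integration.integrable_bound)
    show "integrable (measure_pmf \<mu>) (\<lambda>d. exp K1c * W0 d)" using intW0 by simp
    show "AE d in measure_pmf \<mu>. norm (V d) \<le> norm (exp K1c * W0 d)"
      unfolding AE_measure_pmf_iff using Vb by (auto simp: V_def W0_def)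
  qed simp
  have SV: "S d \<le> V d / t" for d
  proof -
    have "t * S d \<le> V d" unfolding V_def using exp_ge_add_one_self[of "t * S d"] by linarith
    then show ?thesis using t0 by (simp add: field_simps)
  qed
  have S0: "S d \<ge> 0" for d by (simp add: S_def)
  have intA: "integrable (measure_pmf \<mu>) (\<lambda>d. real_of_int (fst d))"
  proof (rule Bochner_Integration.integrable_bound)
    show "integrable (measure_pmf \<mu>) (\<lambda>d. V d / t)" using intV by simp
    show "AE d in measure_pmf \<mu>. norm (real_of_int (fst d)) \<le> norm (V d / t)"
    proof (rule AE_I2)
      fix d
      have "norm (real_of_int (fst d)) \<le> S d" by (simp add: S_def)
      also have "\<dots> \<le> V d / t" by (rule SV)
      also have "\<dots> \<le> norm (V d / t)" unfolding real_norm_def by (rule abs_ge_self)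
      finally show "norm (real_of_int (fst d)) \<le> norm (V d / t)" .
    qed
  qed simp
  have intB: "integrable (measure_pmf \<mu>) (\<lambda>d. real_of_int (snd d))"
  proof (rule Bochner_Integration.integrable_bound)
    show "integrable (measure_pmf \<mu>) (\<lambda>d. V d / t)" using intV by simp
    show "AE d in measure_pmf \<mu>. norm (real_of_int (snd d)) \<le> norm (V d / t)"
    proof (rule AE_I2)
      fix d
      have "norm (real_of_int (snd d)) \<le> S d" by (simp add: S_def)
      also have "\<dots> \<le> V d / t" by (rule SV)
      also have "\<dots> \<le> norm (V d / t)" unfolding real_norm_def by (rule abs_ge_self)
      finally show "norm (real_of_int (snd d)) \<le> norm (V d / t)" .
    qed
  qed simp
  define m1 where "m1 = measure_pmf.expectation \<mu> (\<lambda>d. real_of_int (fst d))"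
  define m2 where "m2 = measure_pmf.expectation \<mu> (\<lambda>d. real_of_int (snd d))"
  have m2n: "m2 < 0" using m2_neg by (simp add: m2_def)
  define c where "c = - m2 / (2 * (\<bar>m1\<bar> + 1))"
  have cpos: "c > 0" unfolding c_def using m2n by (intro divide_pos_pos) auto
  have cm1: "c * (\<bar>m1\<bar> + 1) = - m2 / 2" unfolding c_def
    by (simp add: field_simps add_pos_nonneg)
  define Z where "Z d = real_of_int (snd d) - c * real_of_int (fst d)" for d :: "int \<times> int"
  have EZ: "measure_pmf.expectation \<mu> Z = m2 - c * m1"
    using intA intB by (simp add: Z_def[abs_def] m1_def m2_def)
  have EZn: "measure_pmf.expectation \<mu> Z < 0"
  proof -
    have "- (c * m1) \<le> c * \<bar>m1\<bar>" using cpos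
      by (metis abs_ge_minus_self abs_mult abs_of_pos)
    then show ?thesis unfolding EZ using cm1 m2n cpos by (simp add: algebra_simps)
  qed
  define t1 where "t1 = t / (1 + c)"
  have t1pos: "t1 > 0" using t0 cpos by (simp add: t1_def)
  have ZV: "exp (t1 * \<bar>Z d\<bar>) \<le> V d" for d
  proof -
    have "\<bar>Z d\<bar> \<le> \<bar>real_of_int (snd d)\<bar> + c * \<bar>real_of_int (fst d)\<bar>"
      using cpos unfolding Z_def by (simp add: abs_mult abs_triangle_ineq4 order_trans[OF abs_triangle_ineq4])
    also have "\<dots> \<le> (1 + c) * S d" using cpos by (simp add: S_def algebra_simps)
    finally have "t1 * \<bar>Z d\<bar> \<le> t1 * ((1 + c) * S d)" using t1pos by (intro mult_left_mono) auto
    also have "\<dots> = t * S d" using cpos by (simp add: t1_def)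
    finally show ?thesis by (simp add: V_def)
  qed
  have intZW: "integrable (measure_pmf \<mu>) (\<lambda>d. exp (t1 * \<bar>Z d\<bar>))"
  proof (rule Bochner_Integration.integrable_bound[OF intV])
    show "AE d in measure_pmf \<mu>. norm (exp (t1 * \<bar>Z d\<bar>)) \<le> norm (V d)"
      using ZV by (auto simp: V_def)
  qed simp
  obtain s where spos: "s > 0" and intE: "integrable (measure_pmf \<mu>) (\<lambda>d. exp (s * Z d))"
    and E1: "measure_pmf.expectation \<mu> (\<lambda>d. exp (s * Z d)) \<le> 1"
    using mgf_le_one[OF t1pos intZW EZn] by blast
  define f where "f v = exp (s * real_of_int (snd v) - s * c * real_of_int (fst v))" for v :: "int \<times> int"
  have fpos: "f v > 0" for v by (simp add: f_def)
  have stepM: "(\<lambda>v. pmf (K1 k0 \<mu> \<mu>2 z) v * f v) summable_on A \<and>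
       infsum (\<lambda>v. pmf (K1 k0 \<mu> \<mu>2 z) v * f v) UNIV \<le> f z"
    if z: "fst z \<ge> int k0" for z A
  proof -
    have K1z: "K1 k0 \<mu> \<mu>2 z = map_pmf (\<lambda>d. (fst z + fst d, snd z + snd d)) \<mu>"
      using z by (simp add: K1_def shift_def)
    have fz: "f (fst z + fst d, snd z + snd d) = f z * exp (s * Z d)" for d
      by (simp add: f_def Z_def algebra_simps flip: exp_add)
    have int1: "integrable (measure_pmf (K1 k0 \<mu> \<mu>2 z)) f"
      using intE by (simp add: K1z fz)
    have "measure_pmf.expectation (K1 k0 \<mu> \<mu>2 z) f = f z * measure_pmf.expectation \<mu> (\<lambda>d. exp (s * Z d))"
      by (simp add: K1z fz)
    also have "\<dots> \<le> f z" using E1 fpos[of z] by (simp add: mult_left_le)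
    finally have ex: "measure_pmf.expectation (K1 k0 \<mu> \<mu>2 z) f \<le> f z" .
    have "infsum (\<lambda>v. pmf (K1 k0 \<mu> \<mu>2 z) v * f v) UNIV = measure_pmf.expectation (K1 k0 \<mu> \<mu>2 z) f"
      by (rule pmf_infsum_expectation[OF int1])
    then show ?thesis using ex pmf_summable[OF int1] by (intro conjI) auto
  qed
  show ?thesis
  proof
    fix k :: nat
    define L where "L = max (int k0 - 1) (int k)"
    have Lk: "L \<ge> int k0 - 1" by (simp add: L_def)
    have all: "\<forall>i j l. i \<ge> int k0 \<longrightarrow>
           hitY (K1 k0 \<mu> \<mu>2) (max (int k0 - 1) (int k)) (i, j) l
             \<le> exp (s * c * real_of_int L) * exp (- s * real_of_int (l - j) - s * c * real_of_int i)"
      using final_part[OF spos cpos f_def Lk stepM] unfolding L_def by blast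
    have p1: "exp (s * c * real_of_int L) > 0" by simp
    have p2: "s * c > 0" using spos cpos by simp
    show "\<exists>C>0. \<exists>\<theta>>0. \<exists>\<theta>'>0. \<forall>i j l. i \<ge> int k0 \<longrightarrow>
           hitY (K1 k0 \<mu> \<mu>2) (max (int k0 - 1) (int k)) (i, j) l
             \<le> C * exp (- \<theta> * real_of_int (l - j) - \<theta>' * real_of_int i)"
      using all p1 p2 spos by blast
  qed
qed

end
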